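(* For all positive integers $m$ and $k$, the Kneser graph $\mathrm{KG}(m(2k+1),mk)$ (whose odd girth is $2k+1$) admits an orientation in which every cycle of length $2k+1$ is alternating.
   Context: The Kneser graph $\mathrm{KG}(n,k)$ ($n\ge 2k$) has as vertices all $k$-element subsets of $\{1,\dots,n\}$, two being adjacent iff disjoint. The odd girth is the length of a shortest odd cycle. An orientation assigns each edge exactly one direction. In an oriented graph, a subgraph that is a cycle is called alternating if at most one of its vertices has both positive in-degree and positive out-degree within that cycle. *)

theory Defs
  imports Main
begin

definition kneser_vertices :: "nat \<Rightarrow> nat \<Rightarrow> nat set set" where
  "kneser_vertices n k = {A. A \<subseteq> {1..n} \<and> card A = k}"

definition kneser_adj :: "nat \<Rightarrow> nat \<Rightarrow> nat set \<Rightarrow> nat set \<Rightarrow> bool" where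
  "kneser_adj n k A B \<longleftrightarrow> A \<in> kneser_vertices n k \<and> B \<in> kneser_vertices n k \<and> A \<inter> B = {}"

definition is_orientation :: "('a \<Rightarrow> 'a \<Rightarrow> bool) \<Rightarrow> ('a \<Rightarrow> 'a \<Rightarrow> bool) \<Rightarrow> bool" where
  "is_orientation adj D \<longleftrightarrow>
     (\<forall>u v. D u v \<longrightarrow> adj u v) \<and>
     (\<forall>u v. adj u v \<longrightarrow> (D u v \<or> D v u) \<and> \<not> (D u v \<and> D v u))"

text \<open>The cycle subgraph
  has the vertices of the list and the edges between cyclically consecutive ones.\<close>

definition is_cycle :: "('a \<Rightarrow> 'a \<Rightarrow> bool) \<Rightarrow> nat \<Rightarrow> 'a list \<Rightarrow> bool" where
  "is_cycle adj L c \<longleftrightarrow> L \<ge> 3 \<and> length c = L \<and> distinct c \<and>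
     (\<forall>i<L. adj (c ! i) (c ! ((i + 1) mod L)))"

definition cyc_has_in :: "('a \<Rightarrow> 'a \<Rightarrow> bool) \<Rightarrow> 'a list \<Rightarrow> nat \<Rightarrow> bool" where
  "cyc_has_in D c i \<longleftrightarrow>
     (let L = length c in D (c ! ((i + L - 1) mod L)) (c ! i) \<or> D (c ! ((i + 1) mod L)) (c ! i))"

definition cyc_has_out :: "('a \<Rightarrow> 'a \<Rightarrow> bool) \<Rightarrow> 'a list \<Rightarrow> nat \<Rightarrow> bool" where
  "cyc_has_out D c i \<longleftrightarrow>
     (let L = length c in D (c ! i) (c ! ((i + L - 1) mod L)) \<or> D (c ! i) (c ! ((i + 1) mod L)))"

definition alternating :: "('a \<Rightarrow> 'a \<Rightarrow> bool) \<Rightarrow> 'a list \<Rightarrow> bool" where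
  "alternating D c \<longleftrightarrow>
     card {i. i < length c \<and> cyc_has_in D c i \<and> cyc_has_out D c i} \<le> 1"

end

theory Submission
  imports Defs
begin

lemma indep_card:
  fixes S :: "nat set"
  assumes "S \<subseteq> {..<L}" "\<forall>i\<in>S. (i+1) mod L \<notin> S" "L = 2*k+1"
  shows "card S \<le> k \<and> card ({..<L} - (S \<union> (\<lambda>i. (i+1) mod L) ` S)) = L - 2 * card S"
proof -
  let ?f = "\<lambda>i. (i+1) mod L"
  have inj: "inj_on ?f {..<L}"
    unfolding inj_on_def using assms(3) by (auto simp: mod_Suc split: if_splits)
  have fin: "finite S" using assms(1) finite_subset by blast
  have c1: "card (?f ` S) = card S" using inj assms(1) by (meson card_image inj_on_subset)
  have disj: "S \<inter> ?f ` S = {}" using assms(2) by auto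
  have sub: "S \<union> ?f ` S \<subseteq> {..<L}" using assms(1,3) by auto
  have cu: "card (S \<union> ?f ` S) = 2 * card S"
    using card_Un_disjoint[OF fin finite_imageI[OF fin] disj] c1 by simp
  have "card (S \<union> ?f ` S) \<le> L" using card_mono[OF _ sub] by simp
  then have "card S \<le> k" using cu assms(3) by simp
  moreover have "card ({..<L} - (S \<union> ?f ` S)) = L - 2 * card S"
    using card_Diff_subset[OF finite_subset[OF sub] sub] cu by simp
  ultimately show ?thesis by simp
qed

lemma double_count:
  fixes c :: "nat set list" and N :: "nat set"
  assumes "\<forall>i<L. c ! i \<subseteq> N" "finite N"
  shows "(\<Sum>i<L. card (c ! i)) = (\<Sum>x\<in>N. card {i. i < L \<and> x \<in> c ! i})"
proof -
  have "(\<Sum>i<L. card (c ! i)) = (\<Sum>i<L. \<Sum>x\<in>N. if x \<in> c ! i then 1 else 0)"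
  proof (rule sum.cong[OF refl])
    fix i assume "i \<in> {..<L}"
    then have "c ! i = {x\<in>N. x \<in> c ! i}" using assms by auto
    have "(\<Sum>x\<in>N. if x \<in> c ! i then 1 else 0) = card (N \<inter> c ! i)"
      using assms(2) by (simp add: sum.If_cases Int_def)
    then show "card (c ! i) = (\<Sum>x\<in>N. if x \<in> c ! i then 1 else 0)"
      using \<open>i \<in> {..<L}\<close> assms(1) by (simp add: Int_absorb1)
  qed
  also have "\<dots> = (\<Sum>x\<in>N. \<Sum>i<L. if x \<in> c ! i then 1 else 0)" by (rule sum.swap)
  also have "\<dots> = (\<Sum>x\<in>N. card {i. i < L \<and> x \<in> c ! i})"
  proof (rule sum.cong[OF refl])
    fix x
    have "{i. i < L \<and> x \<in> c ! i} = {i\<in>{..<L}. x \<in> c ! i}" by auto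
    then show "(\<Sum>i<L. if x \<in> c ! i then 1 else 0) = card {i. i < L \<and> x \<in> c ! i}"
      by (simp add: sum.If_cases Int_def)
  qed
  finally show ?thesis .
qed

definition DD :: "nat \<Rightarrow> nat \<Rightarrow> nat set \<Rightarrow> nat set \<Rightarrow> bool" where
  "DD N r A B \<longleftrightarrow> kneser_adj N r A B \<and> Min (A \<union> B) \<in> A"

lemma adj_sym: "kneser_adj N r A B \<Longrightarrow> kneser_adj N r B A"
  unfolding kneser_adj_def by auto

lemma orient: assumes "r \<ge> 1" shows "is_orientation (kneser_adj N r) (DD N r)"
  unfolding is_orientation_def
proof (intro conjI allI impI)
  fix u v assume "DD N r u v" then show "kneser_adj N r u v" by (simp add: DD_def)
next
  fix u v assume a: "kneser_adj N r u v"
  then have fu: "finite u" "finite v" "u \<noteq> {}" "u \<inter> v = {}"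
    using assms unfolding kneser_adj_def kneser_vertices_def
    by (auto intro: finite_subset)
  have "Min (u \<union> v) \<in> u \<union> v" using fu by (intro Min_in) auto
  then show "DD N r u v \<or> DD N r v u" using a adj_sym[OF a] by (auto simp: DD_def Un_commute)
  show "\<not> (DD N r u v \<and> DD N r v u)" using fu by (auto simp: DD_def Un_commute)
qed

lemma notD: assumes "1 \<in> B" "B \<subseteq> {1..N}" shows "\<not> DD N r A B"
proof
  assume d: "DD N r A B"
  then have "A \<subseteq> {1..N}" "A \<inter> B = {}" unfolding DD_def kneser_adj_def kneser_vertices_def by auto
  then have "Min (A \<union> B) = 1" using assms
    by (intro Min_eqI) (auto intro: finite_subset)
  then show False using d \<open>A \<inter> B = {}\<close> assms(1) by (auto simp: DD_def)
qed

lemma pred_eq: fixes i L :: nat assumes "i < L"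
  shows "(i + L - 1) mod L = (if i = 0 then L - 1 else i - 1)"
proof (cases "i = 0")
  case True then show ?thesis using assms by simp
next
  case False
  then have e: "i + L - 1 = (i - 1) + L" by simp
  have "(i + L - 1) mod L = ((i-1) + L) mod L" by (simp only: e)
  also have "\<dots> = (i - 1) mod L" by (rule mod_add_self2)
  also have "\<dots> = i - 1" using assms by simp
  finally show ?thesis using False by simp
qed
lemma succ_eq: fixes i L :: nat assumes "i < L"
  shows "(i + 1) mod L = (if i + 1 = L then 0 else i + 1)"
  using assms by auto
lemma succ_pred:
  fixes i L :: nat
  assumes "i < L" "L \<ge> 2"
  shows "((i + L - 1) mod L + 1) mod L = i" "((i+1) mod L + L - 1) mod L = i"
    "(i + L - 1) mod L < L" "(i+1) mod L < L"
proof -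
  show "(i + L - 1) mod L < L" "(i+1) mod L < L" using assms by auto
  show "((i + L - 1) mod L + 1) mod L = i"
    unfolding pred_eq[OF assms(1)] using assms by (cases "i = 0") auto
  have "(i+1) mod L < L" using assms by auto
  then show "((i+1) mod L + L - 1) mod L = i"
    unfolding pred_eq[OF \<open>(i+1) mod L < L\<close>] succ_eq[OF assms(1)] using assms by (cases "i + 1 = L") auto
qed


lemma cycle_alt:
  fixes m k :: nat and c :: "nat set list"
  assumes m: "m \<ge> 1" and k: "k \<ge> 1"
    and cyc: "is_cycle (kneser_adj (m * (2 * k + 1)) (m * k)) (2 * k + 1) c"
  shows "alternating (DD (m * (2 * k + 1)) (m * k)) c"
proof -
  define N where "N = m * (2 * k + 1)"
  define r where "r = m * k"
  define L where "L = 2 * k + 1"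
  define D where "D = DD N r"
  let ?s = "\<lambda>i. (i + 1) mod L"
  let ?p = "\<lambda>i. (i + L - 1) mod L"
  have L2: "L \<ge> 2" using k by (simp add: L_def)
  have len: "length c = L" and adjc: "\<forall>i<L. kneser_adj N r (c ! i) (c ! ?s i)"
    using cyc by (simp_all add: is_cycle_def N_def r_def L_def)
  have vert: "c ! i \<subseteq> {1..N} \<and> card (c ! i) = r" if "i < L" for i
    using adjc that by (auto simp: kneser_adj_def kneser_vertices_def)
  have disj: "c ! i \<inter> c ! ?s i = {}" if "i < L" for i
    using adjc that by (auto simp: kneser_adj_def)
  define S where "S x = {i. i < L \<and> x \<in> c ! i}" for x
  have Ssub: "S x \<subseteq> {..<L}" for x by (auto simp: S_def)
  have Sind: "\<forall>i\<in>S x. ?s i \<notin> S x" for x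
    using disj by (auto simp: S_def)
  have Sle: "card (S x) \<le> k" for x
    using indep_card[OF Ssub Sind L_def] by simp
  have "(\<Sum>i<L. card (c ! i)) = (\<Sum>x\<in>{1..N}. card (S x))"
    unfolding S_def by (rule double_count) (use vert in auto)
  moreover have "(\<Sum>i<L. card (c ! i)) = L * r" using vert by simp
  moreover have "L * r = N * k" by (simp add: N_def r_def L_def algebra_simps)
  ultimately have sumS: "(\<Sum>x\<in>{1..N}. card (S x)) = N * k"
    by simp
  have N1: "1 \<in> {1..N}" using m by (simp add: N_def)
  have S1: "card (S 1) = k"
  proof (rule ccontr)
    assume "card (S 1) \<noteq> k"
    then have lt: "card (S 1) < k" using Sle[of 1] by simp
    have "(\<Sum>x\<in>{1..N}. card (S x)) = card (S 1) + (\<Sum>x\<in>{1..N} - {1}. card (S x))"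
      using sum.remove[OF finite_atLeastAtMost N1] .
    also have "(\<Sum>x\<in>{1..N} - {1}. card (S x)) \<le> (\<Sum>x\<in>{1..N} - {1}. k)"
      by (rule sum_mono) (rule Sle)
    also have "\<dots> = (N - 1) * k" using N1 by simp
    finally have "N * k < k + (N - 1) * k" using lt sumS by simp
    moreover have "k + (N - 1) * k = N * k" using N1
      by (cases N) auto
    ultimately show False by simp
  qed
  define U where "U = {..<L} - (S 1 \<union> ?s ` S 1)"
  have "card U = 1" using indep_card[OF Ssub Sind L_def] S1 by (simp add: U_def L_def)
  then obtain j where Uj: "U = {j}" by (auto simp: card_Suc_eq)
  have inU: "i = j" if "i < L" "i \<notin> S 1" "?p i \<notin> S 1" for i
  proof -
    have "i \<notin> ?s ` S 1"
    proof
      assume "i \<in> ?s ` S 1"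
      then obtain t where "t \<in> S 1" "i = ?s t" by auto
      then have "?p i = t" using succ_pred(2)[OF _ L2, of t] Ssub by auto
      then show False using that \<open>t \<in> S 1\<close> by simp
    qed
    then have "i \<in> U" using that by (simp add: U_def)
    then show ?thesis using Uj by simp
  qed
  have adjs: "kneser_adj N r (c ! i) (c ! ?s i)" "kneser_adj N r (c ! ?p i) (c ! i)" if "i < L" for i
  proof -
    show "kneser_adj N r (c ! i) (c ! ?s i)" using adjc that by blast
    have "kneser_adj N r (c ! ?p i) (c ! ?s (?p i))" using adjc succ_pred(3)[OF that L2] by blast
    then show "kneser_adj N r (c ! ?p i) (c ! i)" unfolding succ_pred(1)[OF that L2] .
  qed
  have orD: "is_orientation (kneser_adj N r) D" unfolding D_def
    by (rule orient) (use m k in \<open>simp add: r_def\<close>)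
  have notin: "\<not> D (c ! i) (c ! t)" if "t < L" "t \<in> S 1" for i t
    unfolding D_def using that vert[OF that(1)] by (intro notD) (auto simp: S_def)
  define T where "T = {i. i < length c \<and> cyc_has_in D c i \<and> cyc_has_out D c i}"
  have Tprop: "(i = j \<and> D (c ! j) (c ! ?p j)) \<or> (?s i = j \<and> D (c ! i) (c ! ?s i))"
    if "i \<in> T" for i
  proof -
    have iL: "i < L" using that len by (simp add: T_def)
    have "i \<notin> S 1"
    proof
      assume "i \<in> S 1"
      then have "\<not> D (c ! ?p i) (c ! i)" "\<not> D (c ! ?s i) (c ! i)" using notin iL by auto
      then show False using that len by (simp add: T_def cyc_has_in_def Let_def)
    qed
    have "D (c ! i) (c ! ?p i) \<or> D (c ! i) (c ! ?s i)"
      using that len by (simp add: T_def cyc_has_out_def Let_def)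
    then show ?thesis
    proof
      assume d: "D (c ! i) (c ! ?p i)"
      then have "?p i \<notin> S 1" using notin succ_pred(3)[OF iL L2] by blast
      then have "i = j" using inU iL \<open>i \<notin> S 1\<close> by blast
      then show ?thesis using d by simp
    next
      assume d: "D (c ! i) (c ! ?s i)"
      then have "?s i \<notin> S 1" using notin succ_pred(4)[OF iL L2] by blast
      moreover have "?p (?s i) \<notin> S 1" using succ_pred(2)[OF iL L2] \<open>i \<notin> S 1\<close> by simp
      ultimately have "?s i = j" using inU succ_pred(4)[OF iL L2] by blast
      then show ?thesis using d by simp
    qed
  qed
  have TL: "T \<subseteq> {..<L}" using len by (auto simp: T_def)
  have jL: "j < L" using Uj by (auto simp: U_def)
  have "\<forall>a\<in>T. \<forall>b\<in>T. a = b"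
  proof (intro ballI)
    fix a b assume a: "a \<in> T" and b: "b \<in> T"
    have aL: "a < L" and bL: "b < L" using a b TL by auto
    have anti: "\<not> (D x y \<and> D y x)" if "kneser_adj N r x y" for x y
      using orD that unfolding is_orientation_def by blast
    show "a = b"
      using Tprop[OF a] Tprop[OF b]
    proof (elim disjE conjE)
      assume "a = j" "b = j" then show ?thesis by simp
    next
      assume "?s a = j" "?s b = j"
      then show ?thesis using succ_pred(2)[OF aL L2] succ_pred(2)[OF bL L2] by metis
    next
      assume h: "a = j" "D (c ! j) (c ! ?p j)" "?s b = j" "D (c ! b) (c ! ?s b)"
      then have "?p j = b" using succ_pred(2)[OF bL L2] by simp
      then show ?thesis using h anti[OF adjs(1)[OF bL]] by simp
    next
      assume h: "?s a = j" "D (c ! a) (c ! ?s a)" "b = j" "D (c ! j) (c ! ?p j)"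
      then have "?p j = a" using succ_pred(2)[OF aL L2] by simp
      then show ?thesis using h anti[OF adjs(1)[OF aL]] by simp
    qed
  qed
  then have "card T \<le> 1"
    using card_le_Suc0_iff_eq[OF finite_subset[OF TL finite_lessThan]] by simp
  then show ?thesis unfolding alternating_def T_def D_def N_def r_def .
qed

theorem mainTheorem14:
  fixes m k :: nat
  assumes "m \<ge> 1" and "k \<ge> 1"
  shows "\<exists>D. is_orientation (kneser_adj (m * (2 * k + 1)) (m * k)) D \<and>
           (\<forall>c. is_cycle (kneser_adj (m * (2 * k + 1)) (m * k)) (2 * k + 1) c \<longrightarrow>
                alternating D c)"
proof (intro exI conjI allI impI)
  show "is_orientation (kneser_adj (m * (2 * k + 1)) (m * k)) (DD (m * (2 * k + 1)) (m * k))"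
    by (rule orient) (use assms in simp)
  fix c assume "is_cycle (kneser_adj (m * (2 * k + 1)) (m * k)) (2 * k + 1) c"
  then show "alternating (DD (m * (2 * k + 1)) (m * k)) c"
    using cycle_alt assms by blast
qed

end
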